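(* Let $n,n_1,n_2\in\mathbb{N}^+$ and $p_1,p_2$ satisfy the standing assumptions below, and put $s_2=n/n_2$. Let $G_{l_1+l_2}$ be the two-layer stochastic block model $G(n,n_1,n_2,p_1,p_2)$, and let $G_{l_1+N}$ be the model $G(n,n_1,1,p_1,p_n)$ with $p_n=\frac{s_2-1}{n-1}\,p_2$, i.e. the layer-1 structure (with the same $n_1$ communities and probability $p_1$) plus uniform random noise in which every pair of nodes is additionally joined independently with probability $p_n$ (so that the expected number of noise edges equals the expected number of edges generated by layer 2 in $G_{l_1+l_2}$). Let $Q^{S}_{l_1}$ and $Q^{R}_{l_1}$ denote the (expected) modularity of the ground-truth layer $l_1$ in $G_{l_1+l_2}$ and in $G_{l_1+N}$ respectively. Then $Q^{S}_{l_1}<Q^{R}_{l_1}$.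
   Context: Multi-layer stochastic block model $G(n,n_1,\dots,n_L,p_1,\dots,p_L)$: a random graph on $n$ nodes with $L$ layers. For each layer $l$ the nodes are partitioned into $n_l$ planted communities of size $s_l=n/n_l$; independently for each layer, each pair of distinct nodes in a common community of layer $l$ receives an edge from layer $l$ with probability $p_l$; the graph is the simple union of all generated edges, so a pair of nodes lying in a common community of exactly the layers in a set $T$ is an edge with probability $1-\prod_{l\in T}(1-p_l)$. The partitions of different layers are independent: for any $k\ge 2$ distinct layers $l_1,\dots,l_k$ and any choice of one community from each, the intersection of these communities has $r_{l_1\cdots l_k}=n/(n_{l_1}\cdots n_{l_k})$ nodes (in expectation). Standing assumptions (for the layers of the block model): $n_l\ge 4$, $p_l\in[0.05,1]$, and $n\ge 2\prod_l n_l$. Modularity: for a partition (layer) $l$ of the nodes of a graph with $e$ edges, if community $i$ has $e^i_{ll}$ internal edges, $e^i_{lout}$ edges with exactly one endpoint in it, and total degree $d^i_l=2e^i_{ll}+e^i_{lout}$, then $Q_l=\sum_i\big(\frac{e^i_{ll}}{e}-(\frac{d^i_l}{2e})^2\big)$. In the block model all quantities are replaced by expectations: writing $e_{ll}$, $e_{lout}$ for the expected numbers of internal and outgoing edges of one community of layer $l$ (identical for all communities of the layer), $d_l=2e_{ll}+e_{lout}$ and $e=n_ld_l/2$, the (expected) modularity of layer $l$ is $Q_l=n_l\big[\frac{e_{ll}}{e}-(\frac{d_l}{2e})^2\big]$. *)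

theory Defs
  imports Complex_Main
begin

text \<open>Expected quantities of layer 1 in a two-layer stochastic block model
  G(n, n1, n2, p1, p2). Sizes are real-valued (expectations):
  s1 = n/n1, s2 = n/n2, r12 = n/(n1 n2).\<close>

definition pairs :: "real \<Rightarrow> real" where
  "pairs x = x * (x - 1) / 2"

text \<open>Expected number of internal edges of one layer-1 community: pairs sharing
  also a layer-2 community are edges with probability 1-(1-p1)(1-p2), the other
  pairs of the community with probability p1.\<close>
definition sbm2_e_in :: "real \<Rightarrow> real \<Rightarrow> real \<Rightarrow> real \<Rightarrow> real \<Rightarrow> real" where
  "sbm2_e_in n n1 n2 p1 p2 =
     (let s1 = n / n1; r = n / (n1 * n2) in
        n2 * pairs r * (1 - (1 - p1) * (1 - p2)) + (pairs s1 - n2 * pairs r) * p1)"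

text \<open>Expected number of edges with exactly one endpoint in a layer-1 community
  (only layer 2 can create them).\<close>
definition sbm2_e_out :: "real \<Rightarrow> real \<Rightarrow> real \<Rightarrow> real \<Rightarrow> real \<Rightarrow> real" where
  "sbm2_e_out n n1 n2 p1 p2 =
     (let s2 = n / n2; r = n / (n1 * n2) in n2 * r * (s2 - r) * p2)"

text \<open>Expected modularity Q_l = n_l [e_ll/e - (d_l/(2e))^2] of layer 1,
  with d = 2 e_ll + e_lout and e = n_l d / 2.\<close>
definition sbm2_modularity1 :: "real \<Rightarrow> real \<Rightarrow> real \<Rightarrow> real \<Rightarrow> real \<Rightarrow> real" where
  "sbm2_modularity1 n n1 n2 p1 p2 =
     (let ei = sbm2_e_in n n1 n2 p1 p2; eo = sbm2_e_out n n1 n2 p1 p2;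
          d = 2 * ei + eo; e = n1 * d / 2
      in n1 * (ei / e - (d / (2 * e))\<^sup>2))"

end

theory Submission
  imports Defs
begin

lemma Q_eq:
  assumes "n1 > 0" "2 * sbm2_e_in n n1 n2 p1 p2 + sbm2_e_out n n1 n2 p1 p2 > 0"
  shows "sbm2_modularity1 n n1 n2 p1 p2 =
    2 * sbm2_e_in n n1 n2 p1 p2 / (2 * sbm2_e_in n n1 n2 p1 p2 + sbm2_e_out n n1 n2 p1 p2) - 1 / n1"
proof -
  define ei where "ei = sbm2_e_in n n1 n2 p1 p2"
  define eo where "eo = sbm2_e_out n n1 n2 p1 p2"
  have d: "2 * ei + eo > 0" using assms(2) unfolding ei_def eo_def .
  have dd: "n1 * (2 * ei + eo) > 0" using d assms(1) by simp
  have gen1: "e / (m * x / 2) = 2 * e / x / m" for e m x :: real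
    by (simp add: field_simps)
  have gen2: "x \<noteq> 0 \<Longrightarrow> x / (2 * (m * x / 2)) = 1 / m" for m x :: real
    by (simp add: field_simps)
  have 1: "ei / (n1 * (2 * ei + eo) / 2) = 2 * ei / (2 * ei + eo) / n1" by (rule gen1)
  have 2: "(2 * ei + eo) / (2 * (n1 * (2 * ei + eo) / 2)) = 1 / n1"
    using d by (intro gen2) simp
  have "sbm2_modularity1 n n1 n2 p1 p2 = n1 * (2 * ei / (2 * ei + eo) / n1 - (1 / n1)\<^sup>2)"
    unfolding sbm2_modularity1_def Let_def ei_def[symmetric] eo_def[symmetric] 1 2 ..
  also have "\<dots> = 2 * ei / (2 * ei + eo) - 1 / n1"
  proof -
    have gen3: "m \<noteq> 0 \<Longrightarrow> m * (X / m - (1 / m)\<^sup>2) = X - 1 / m" for m X :: real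
      by (simp add: field_simps power2_eq_square)
    show ?thesis using assms(1) by (intro gen3) simp
  qed
  finally show ?thesis unfolding ei_def eo_def .
qed

lemma frac_lt:
  fixes x y u v :: real
  assumes "x > 0" "y > 0" "u > 0" "v > 0" "x * v < u * y"
  shows "2 * x / (2 * x + y) < 2 * u / (2 * u + v)"
proof -
  have "2 * x * (2 * u + v) < 2 * u * (2 * x + y)" using assms(5) by (simp add: algebra_simps)
  thus ?thesis using assms by (simp add: divide_simps)
qed

lemma main_real:
  fixes N k1 k2 a b :: real
  assumes k1: "k1 \<ge> 4" and k2: "k2 \<ge> 4" and N: "N \<ge> 2 * k1 * k2"
    and a: "0.05 \<le> a" "a \<le> 1" and b: "0.05 \<le> b" "b \<le> 1"
  shows "sbm2_modularity1 N k1 k2 a b < sbm2_modularity1 N k1 1 a ((N / k2 - 1) / (N - 1) * b)"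
proof -
  define s1 where "s1 = N / k1"
  define s2 where "s2 = N / k2"
  define r where "r = N / (k1 * k2)"
  define c where "c = (N - k2) / (N - 1)"
  define q where "q = (N / k2 - 1) / (N - 1) * b"
  have kk: "k1 * k2 \<ge> 4 * 4" using k1 k2 by (intro mult_mono) auto
  have Npos: "N > 1" using kk N by linarith
  have r2: "r \<ge> 2" unfolding r_def using N k1 k2 by (simp add: field_simps)
  have s1r: "s1 = k2 * r" unfolding s1_def r_def using k2 by (simp add: field_simps)
  have s2r: "s2 = k1 * r" unfolding s2_def r_def using k1 by (simp add: field_simps)
  have Ns: "N = k1 * k2 * r" unfolding r_def using k1 k2 by (simp add: field_simps)
  have qc: "q = b * c / k2" unfolding q_def c_def using k2 Npos by (simp add: field_simps)
  have kk2: "k1 * k2 \<ge> 4 * k2" using k1 k2 by (intro mult_right_mono) auto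
  have c1: "N - k2 > 0" "N - k2 < N - 1" using Npos k2 N kk2 by linarith+
  have c0: "c > 0" "c < 1" unfolding c_def using c1 by (auto simp: divide_simps)
  have q0: "q > 0" using qc c0 b k2 by simp
  define A where "A = (s1 - 1) * a + (r - 1) * b * (1 - a)"
  define B where "B = a + q * (1 - a)"
  have eiS: "sbm2_e_in N k1 k2 a b = s1 / 2 * A"
    unfolding sbm2_e_in_def Let_def pairs_def A_def s1_def[symmetric] r_def[symmetric] s1r
    using k2 by (simp add: field_simps)
  have eoS: "sbm2_e_out N k1 k2 a b = s1 * (s2 - r) * b"
    unfolding sbm2_e_out_def Let_def s2_def[symmetric] r_def[symmetric] s1r by simp
  have eiR: "sbm2_e_in N k1 1 a q = s1 * (s1 - 1) / 2 * B"
  proof -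
    have "sbm2_e_in N k1 1 a q = pairs s1 * (1 - (1 - a) * (1 - q))"
      unfolding sbm2_e_in_def Let_def s1_def by simp
    thus ?thesis unfolding pairs_def B_def by (simp add: algebra_simps)
  qed
  have eoR: "sbm2_e_out N k1 1 a q = s1 * (N - s1) * q"
    unfolding sbm2_e_out_def Let_def s1_def by simp
  have "k2 * r \<ge> 4 * 2" using r2 k2 by (intro mult_mono) auto
  hence s1g: "s1 \<ge> 8" using s1r by simp
  have A1: "(s1 - 1) * a > 0" using s1g a by simp
  have A2: "(r - 1) * b * (1 - a) \<ge> 0" using r2 a b by simp
  have A0: "A > 0" unfolding A_def using A1 A2 by linarith
  have "q * (1 - a) \<ge> 0" using q0 a by simp
  moreover have "a > 0" using a by simp
  ultimately have B0: "B > 0" unfolding B_def by linarith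
  have "s2 - r = (k1 - 1) * r" using s2r by (simp add: algebra_simps)
  hence sr: "s2 - r > 0" using r2 k1 by simp
  have Nsq: "(N - s1) * q = (s2 - r) * b * c"
    unfolding qc s1r s2r Ns using k2 by (simp add: field_simps)
  have key: "A * c < (s1 - 1) * B"
  proof -
    have h1: "(s1 - 1) * a * c < (s1 - 1) * a" using c0 s1g a by simp
    have h2: "(r - 1) * b * (1 - a) * c \<le> (s1 - 1) * q * (1 - a)"
    proof -
      have "(r - 1) \<le> (s1 - 1) / k2" using s1r k2 by (simp add: field_simps)
      hence "(r - 1) * (b * (1 - a) * c) \<le> (s1 - 1) / k2 * (b * (1 - a) * c)"
        using b a c0 by (intro mult_right_mono) auto
      thus ?thesis unfolding qc by (simp add: field_simps)
    qed
    show ?thesis unfolding A_def B_def using h1 h2 by (simp add: algebra_simps)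
  qed
  have x: "s1 / 2 * A * (s1 * (N - s1) * q) < s1 * (s1 - 1) / 2 * B * (s1 * (s2 - r) * b)"
  proof -
    have "s1 / 2 * A * (s1 * (N - s1) * q) = s1 * s1 / 2 * A * ((N - s1) * q)"
      by (simp add: algebra_simps)
    also have "\<dots> = s1 * s1 / 2 * A * ((s2 - r) * b * c)" by (simp only: Nsq)
    also have "\<dots> = (s1 * s1 / 2 * (s2 - r) * b) * (A * c)" by (simp add: algebra_simps)
    finally have "s1 / 2 * A * (s1 * (N - s1) * q) = (s1 * s1 / 2 * (s2 - r) * b) * (A * c)" .
    also have "\<dots> < (s1 * s1 / 2 * (s2 - r) * b) * ((s1 - 1) * B)"
      using key s1g sr b by (intro mult_strict_left_mono) auto
    also have "\<dots> = s1 * (s1 - 1) / 2 * B * (s1 * (s2 - r) * b)" by (simp add: algebra_simps)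
    finally show ?thesis .
  qed
  have "N - s1 = (k1 - 1) * s1" using s1r Ns by (simp add: algebra_simps)
  hence Nmq: "N - s1 > 0" using s1g k1 by simp
  have lt: "2 * sbm2_e_in N k1 k2 a b / (2 * sbm2_e_in N k1 k2 a b + sbm2_e_out N k1 k2 a b)
     < 2 * sbm2_e_in N k1 1 a q / (2 * sbm2_e_in N k1 1 a q + sbm2_e_out N k1 1 a q)"
    unfolding eiS eoS eiR eoR
    using x s1g A0 B0 sr b q0 Nmq by (intro frac_lt) auto
  have "sbm2_modularity1 N k1 k2 a b = 2 * sbm2_e_in N k1 k2 a b / (2 * sbm2_e_in N k1 k2 a b + sbm2_e_out N k1 k2 a b) - 1 / k1"
  proof (rule Q_eq)
    show "k1 > 0" using k1 by simp
    have "s1 / 2 * A > 0" "s1 * (s2 - r) * b > 0" using s1g A0 sr b by auto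
    thus "2 * sbm2_e_in N k1 k2 a b + sbm2_e_out N k1 k2 a b > 0" unfolding eiS eoS by linarith
  qed
  moreover have "sbm2_modularity1 N k1 1 a q = 2 * sbm2_e_in N k1 1 a q / (2 * sbm2_e_in N k1 1 a q + sbm2_e_out N k1 1 a q) - 1 / k1"
  proof (rule Q_eq)
    show "k1 > 0" using k1 by simp
    have "s1 * (s1 - 1) / 2 * B > 0" "s1 * (N - s1) * q > 0" using s1g B0 q0 Nmq by auto
    thus "2 * sbm2_e_in N k1 1 a q + sbm2_e_out N k1 1 a q > 0" unfolding eiR eoR by linarith
  qed
  ultimately show ?thesis using lt unfolding q_def by simp
qed

theorem theorem8:
  fixes n n1 n2 :: nat and p1 p2 :: real
  assumes "n > 0" "n1 \<ge> 4" "n2 \<ge> 4"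
    and "0.05 \<le> p1" "p1 \<le> 1" "0.05 \<le> p2" "p2 \<le> 1"
    and "n \<ge> 2 * n1 * n2"
  shows "sbm2_modularity1 (real n) (real n1) (real n2) p1 p2
       < sbm2_modularity1 (real n) (real n1) 1 p1
           ((real n / real n2 - 1) / (real n - 1) * p2)"
proof (rule main_real)
  show "real n \<ge> 2 * real n1 * real n2" using assms(8) by (metis of_nat_mono of_nat_mult of_nat_numeral)
qed (use assms in auto)

end
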